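(* Fix an agent index $i$. For every $w\in\mathcal{R}_\infty^i$: (i) $Sw\in\mathcal{R}_\infty^i$; (ii) $S^{-1}w\in\mathcal{R}_\infty^i$; (iii) $S\mathcal{R}_\infty^i = \mathcal{R}_\infty^i$; (iv) $[(\Pi_i w)^\top\ w^\top]^\top\in\mathcal{O}_\infty^i$.
   Context: Agent $i$ has matrices $A_i\in\mathbb{R}^{n_i\times n_i}$, $B_i\in\mathbb{R}^{n_i\times m_i}$, $C_i\in\mathbb{R}^{q\times n_i}$ with $(A_i,B_i)$ controllable, and a constraint set $\mathbb{Z}_i\subset\mathbb{R}^{n_i+m_i}$ which is a polytope containing the origin in its interior. $K_i$ is fixed with $A_i^c := A_i + B_iK_i$ Schur. $S\in\mathbb{R}^{p\times p}$, $Q_e\in\mathbb{R}^{q\times p}$ with $S^\rho = I$ for some positive integer $\rho$, and for each eigenvalue $\lambda$ of $S$ the matrix $\begin{bmatrix} A_i-\lambda I & B_i\\ C_i & \mathbf{0}\end{bmatrix}$ has full row rank. $\Pi_i,\Gamma_i$ satisfy $A_i\Pi_i + B_i\Gamma_i = \Pi_iS$, $C_i\Pi_i = Q_e$, and $L_i := \Gamma_i - K_i\Pi_i$. Fix $\epsilon_i\in(0,1)$. $\mathcal{O}_\infty^i$ is the set of $(x,w)\in\mathbb{R}^{n_i}\times\mathbb{R}^p$ such that the sequence $x(0)=x$, $w(0)=w$, $x(k+1) = A_i^cx(k) + B_iL_iw(k)$, $w(k+1) = Sw(k)$ satisfies $[x(k)^\top\ (K_ix(k) + L_iw(k))^\top]^\top\in(1-\epsilon_i)\mathbb{Z}_i$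 for all $k\ge0$. $\mathcal{R}_\infty^i = \{w\in\mathbb{R}^p : \exists x \text{ with } [x^\top\ w^\top]^\top\in\mathcal{O}_\infty^i\}$. *)

theory Defs
  imports "HOL-Analysis.Analysis"
begin

text \<open>Matrix power (note: the default power on vec types is componentwise).\<close>
definition mat_pow :: "real^'n^'n \<Rightarrow> nat \<Rightarrow> real^'n^'n" where
  "mat_pow A k = (((**) A) ^^ k) (mat 1)"

definition cmat :: "real^'c^'r \<Rightarrow> complex^'c^'r" where
  "cmat M = (\<chi> i j. complex_of_real (M $ i $ j))"

definition controllable :: "real^'n^'n \<Rightarrow> real^'m^'n \<Rightarrow> bool" where
  "controllable A B \<longleftrightarrow>
     span {mat_pow A k *v (B *v u) | k u. k < CARD('n)} = (UNIV :: (real^'n) set)"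

definition schur :: "real^'n^'n \<Rightarrow> bool" where
  "schur A \<longleftrightarrow> (\<forall>(l::complex) (v::complex^'n). v \<noteq> 0 \<and> cmat A *v v = l *s v \<longrightarrow> cmod l < 1)"

definition is_eigenvalue :: "real^'p^'p \<Rightarrow> complex \<Rightarrow> bool" where
  "is_eigenvalue S \<mu> \<longleftrightarrow> (\<exists>v::complex^'p. v \<noteq> 0 \<and> cmat S *v v = \<mu> *s v)"

definition regulator_block ::
  "real^'n^'n \<Rightarrow> real^'m^'n \<Rightarrow> real^'n^'q \<Rightarrow> complex \<Rightarrow> complex^('n + 'm)^('n + 'q)" where
  "regulator_block A B C \<mu> = (\<chi> r c.
     (case r of
        Inl i \<Rightarrow> (case c of Inl j \<Rightarrow> complex_of_real (A $ i $ j) - (if i = j then \<mu> else 0)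
                           | Inr j \<Rightarrow> complex_of_real (B $ i $ j))
      | Inr i \<Rightarrow> (case c of Inl j \<Rightarrow> complex_of_real (C $ i $ j)
                           | Inr j \<Rightarrow> 0)))"

definition full_row_rank :: "'a::field^'c^'r \<Rightarrow> bool" where
  "full_row_rank M \<longleftrightarrow> rank M = CARD('r)"

fun traj :: "real^'n^'n \<Rightarrow> real^'p^'n \<Rightarrow> real^'p^'p \<Rightarrow> real^'n \<Rightarrow> real^'p \<Rightarrow> nat
             \<Rightarrow> (real^'n) \<times> (real^'p)" where
  "traj Ac BL S x w 0 = (x, w)"
| "traj Ac BL S x w (Suc k) =
     (let (xk, wk) = traj Ac BL S x w k in (Ac *v xk + BL *v wk, S *v wk))"

definition O_inf :: "real^'n^'n \<Rightarrow> real^'m^'n \<Rightarrow> real^'n^'m \<Rightarrow> real^'p^'m \<Rightarrow> real^'p^'p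
                     \<Rightarrow> ((real^'n) \<times> (real^'m)) set \<Rightarrow> real \<Rightarrow> ((real^'n) \<times> (real^'p)) set" where
  "O_inf A B K L S Z \<epsilon> = {(x, w). \<forall>k.
      (let (xk, wk) = traj (A + B ** K) (B ** L) S x w k
       in (xk, K *v xk + L *v wk) \<in> (\<lambda>z. (1 - \<epsilon>) *\<^sub>R z) ` Z)}"

definition R_inf :: "real^'n^'n \<Rightarrow> real^'m^'n \<Rightarrow> real^'n^'m \<Rightarrow> real^'p^'m \<Rightarrow> real^'p^'p
                     \<Rightarrow> ((real^'n) \<times> (real^'m)) set \<Rightarrow> real \<Rightarrow> (real^'p) set" where
  "R_inf A B K L S Z \<epsilon> = {w. \<exists>x. (x, w) \<in> O_inf A B K L S Z \<epsilon>}"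

end

theory Submission imports Defs "Jordan_Normal_Form.Spectral_Radius" begin
no_notation Matrix.vec_index (infixl \<open>$\<close> 100)
hide_const (open) Matrix.mat Matrix.vec Matrix.row Matrix.col
hide_type (open) Matrix.mat Matrix.vec

lemma mat_pow_0[simp]: "mat_pow A 0 = mat 1"
  by (simp add: mat_pow_def)
lemma mat_pow_Suc: "mat_pow A (Suc k) = A ** mat_pow A k"
  by (simp add: mat_pow_def)
lemma mat_pow_add: "mat_pow A (a + b) = mat_pow A a ** mat_pow A b"
  by (induction a) (simp_all add: mat_pow_Suc matrix_mul_assoc matrix_mul_lid)
lemma mat_pow_1: "mat_pow A 1 = A"
  by (simp add: mat_pow_Suc matrix_mul_rid)
lemma mat_pow_Suc': "mat_pow A (Suc k) = mat_pow A k ** A"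
  by (metis Suc_eq_plus1 mat_pow_1 mat_pow_add)

lemma mat_pow_scale: "mat_pow (c *\<^sub>R M) k = (c ^ k) *\<^sub>R mat_pow M k"
  by (induction k) (simp_all add: mat_pow_Suc scalar_matrix_assoc[symmetric] matrix_scalar_ac)

definition tm :: "(nat \<Rightarrow> 'n) \<Rightarrow> nat \<Rightarrow> real^'n^'n \<Rightarrow> complex Matrix.mat" where
  "tm f n M = Matrix.mat n n (\<lambda>(i,j). complex_of_real (M $ f i $ f j))"

lemma tm_carrier[simp]: "tm f n M \<in> carrier_mat n n"
  by (simp add: tm_def)
lemma tm_dim[simp]: "dim_row (tm f n M) = n" "dim_col (tm f n M) = n"
  by (simp_all add: tm_def)
lemma tm_index[simp]: "i < n \<Longrightarrow> j < n \<Longrightarrow> tm f n M $$ (i,j) = complex_of_real (M $ f i $ f j)"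
  by (simp add: tm_def)

context
  fixes f :: "nat \<Rightarrow> 'n::finite" and n :: nat
  assumes bij: "bij_betw f {0..<n} (UNIV :: 'n set)"
begin

lemma f_inj: "i < n \<Longrightarrow> j < n \<Longrightarrow> f i = f j \<longleftrightarrow> i = j"
  using bij_betw_imp_inj_on[OF bij] by (auto simp: inj_on_def)

lemma tm_mult: "tm f n (M ** N) = tm f n M * tm f n N"
proof (rule eq_matI)
  fix i j assume i: "i < dim_row (tm f n M * tm f n N)" and j: "j < dim_col (tm f n M * tm f n N)"
  then have i': "i < n" and j': "j < n" by simp_all
  have "(tm f n M * tm f n N) $$ (i, j) = (\<Sum>k\<in>{0..<n}. complex_of_real (M $ f i $ f k * N $ f k $ f j))"
    using i' j' by (simp add: scalar_prod_def)
  also have "\<dots> = complex_of_real (\<Sum>k\<in>{0..<n}. M $ f i $ f k * N $ f k $ f j)"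
    by simp
  also have "(\<Sum>k\<in>{0..<n}. M $ f i $ f k * N $ f k $ f j) = (\<Sum>k\<in>UNIV. M $ f i $ k * N $ k $ f j)"
    by (rule sum.reindex_bij_betw[OF bij])
  finally show "tm f n (M ** N) $$ (i, j) = (tm f n M * tm f n N) $$ (i, j)"
    using i' j' by (simp add: matrix_matrix_mult_def)
qed auto

lemma tm_one: "tm f n (mat 1) = 1\<^sub>m n"
  by (rule eq_matI) (auto simp: Finite_Cartesian_Product.mat_def f_inj)

lemma tm_pow: "tm f n (mat_pow M k) = tm f n M ^\<^sub>m k"
  by (induction k) (simp_all add: tm_one mat_pow_Suc' tm_mult)

lemma tm_eig:
  assumes "eigenvector (tm f n M) v \<mu>"
  shows "\<exists>v'::complex^'n. v' \<noteq> 0 \<and> cmat M *v v' = \<mu> *s v'"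
proof -
  from assms have vc: "v \<in> carrier_vec n" and v0: "v \<noteq> 0\<^sub>v n"
    and ev: "tm f n M *\<^sub>v v = \<mu> \<cdot>\<^sub>v v"
    unfolding eigenvector_def by auto
  define g where "g = inv_into {0..<n} f"
  have gf: "g (f i) = i" if "i < n" for i
    unfolding g_def using bij_betw_inv_into_left[OF bij] that by simp
  have fg: "f (g a) = a" for a
    unfolding g_def using bij_betw_inv_into_right[OF bij] by simp
  have gn: "g a < n" for a
    unfolding g_def using bij_betw_inv_into[OF bij] bij_betw_apply by fastforce
  define v' where "v' = (\<chi> a. vec_index v (g a))"
  have dv: "dim_vec v = n" using vc by simp
  obtain i where i: "i < n" "vec_index v i \<noteq> 0"
  proof -
    have "\<exists>i<n. vec_index v i \<noteq> 0"
    proof (rule ccontr)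
      assume "\<not> ?thesis"
      then have "v = 0\<^sub>v n" by (intro eq_vecI) (auto simp: dv)
      with v0 show False by simp
    qed
    then show ?thesis using that by blast
  qed
  have "v' $ f i \<noteq> 0" unfolding v'_def using i gf by simp
  then have nz: "v' \<noteq> 0" by auto
  have eq: "cmat M *v v' = \<mu> *s v'"
  proof (subst Finite_Cartesian_Product.vec_eq_iff, rule allI)
    fix a
    have "(cmat M *v v') $ a = (\<Sum>b\<in>UNIV. complex_of_real (M $ a $ b) * vec_index v (g b))"
      by (simp add: matrix_vector_mult_def cmat_def v'_def)
    also have "\<dots> = (\<Sum>k\<in>{0..<n}. complex_of_real (M $ a $ f k) * vec_index v (g (f k)))"
      by (rule sum.reindex_bij_betw[OF bij, symmetric])
    also have "\<dots> = (\<Sum>k\<in>{0..<n}. tm f n M $$ (g a, k) * vec_index v k)"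
      using gn[of a] by (intro sum.cong) (simp_all add: gf fg)
    also have "\<dots> = vec_index (tm f n M *\<^sub>v v) (g a)"
      using gn[of a] dv by (simp add: scalar_prod_def)
    also have "\<dots> = \<mu> * vec_index v (g a)"
      using gn[of a] dv by (simp add: ev)
    also have "\<dots> = (\<mu> *s v') $ a" by (simp add: v'_def)
    finally show "(cmat M *v v') $ a = (\<mu> *s v') $ a" .
  qed
  show ?thesis using nz eq by blast
qed

lemma schur_eig: "schur (M::real^'n^'n) \<Longrightarrow> eigenvalue (tm f n M) \<mu> \<Longrightarrow> cmod \<mu> < 1"
  unfolding schur_def eigenvalue_def using tm_eig by blast

lemma schur_bound:
  fixes M :: "real^'n^'n"
  assumes sch: "schur M" and n0: "n > 0"
  shows "\<exists>c r. 0 < r \<and> r < 1 \<and> (\<forall>k a b. \<bar>mat_pow M k $ a $ b\<bar> \<le> c * r ^ k)"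
proof -
  define A' where "A' = tm f n M"
  define sr where "sr = spectral_radius A'"
  have Ac: "A' \<in> carrier_mat n n" unfolding A'_def by simp
  from spectral_radius_mem_max(1)[OF Ac n0] obtain lam where
    l: "eigenvalue A' lam" and srl: "sr = cmod lam" unfolding sr_def spectrum_def by auto
  have sr1: "sr < 1" using schur_eig[OF sch] l srl unfolding A'_def by simp
  have sr0: "sr \<ge> 0" using srl by simp
  define r where "r = (1 + sr) / 2"
  have r0: "0 < r" and r1: "r < 1" and srr: "sr < r" using sr1 sr0 unfolding r_def by auto
  define B' where "B' = tm f n ((1 / r) *\<^sub>R M)"
  have Bc: "B' \<in> carrier_mat n n" unfolding B'_def by simp
  have srB: "spectral_radius B' < 1"
  proof -
    from spectral_radius_mem_max(1)[OF Bc n0] obtain \<mu> where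
      m: "eigenvalue B' \<mu>" and srm: "spectral_radius B' = cmod \<mu>" unfolding spectrum_def by auto
    from m obtain v where v: "eigenvector B' v \<mu>" unfolding eigenvalue_def by auto
    then have vc: "v \<in> carrier_vec n" and v0: "v \<noteq> 0\<^sub>v n" and ev: "B' *\<^sub>v v = \<mu> \<cdot>\<^sub>v v"
      unfolding eigenvector_def B'_def by auto
    have dv: "dim_vec v = n" using vc by simp
    have "A' *\<^sub>v v = (complex_of_real r * \<mu>) \<cdot>\<^sub>v v"
    proof (rule eq_vecI)
      fix i assume "i < dim_vec ((complex_of_real r * \<mu>) \<cdot>\<^sub>v v)"
      then have i: "i < n" using dv by simp
      have "vec_index (B' *\<^sub>v v) i = complex_of_real (1 / r) * vec_index (A' *\<^sub>v v) i"
        using i dv unfolding A'_def B'_def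
        by (simp add: scalar_prod_def sum_distrib_left mult.assoc)
      then have "complex_of_real (1 / r) * vec_index (A' *\<^sub>v v) i = \<mu> * vec_index v i"
        using ev i dv by simp
      then have "vec_index (A' *\<^sub>v v) i = complex_of_real r * (\<mu> * vec_index v i)"
        using r0 by (simp add: field_simps)
      then show "vec_index (A' *\<^sub>v v) i = vec_index ((complex_of_real r * \<mu>) \<cdot>\<^sub>v v) i"
        using i dv by simp
    qed (simp add: A'_def dv)
    then have "eigenvalue A' (complex_of_real r * \<mu>)"
      unfolding eigenvalue_def eigenvector_def using vc v0 Ac by auto
    then have "cmod (complex_of_real r * \<mu>) \<le> sr"
      unfolding sr_def by (intro spectral_radius_mem_max(2)[OF Ac n0]) (auto simp: spectrum_def)
    then have h: "r * cmod \<mu> \<le> sr" using r0 by (simp add: norm_mult)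
    then have "r * cmod \<mu> < r * 1" using srr by simp
    then have "cmod \<mu> < 1" using r0 by (simp only: mult_less_cancel_left_pos)
    then show ?thesis using srm by simp
  qed
  from spectral_radius_jnf_norm_bound_less_1_upper_triangular[OF Bc srB]
  obtain c where c: "\<And>k. norm_bound (B' ^\<^sub>m k) c" by auto
  define g where "g = inv_into {0..<n} f"
  have fg: "f (g a) = a" for a
    unfolding g_def using bij_betw_inv_into_right[OF bij] by simp
  have gn: "g a < n" for a
    unfolding g_def using bij_betw_inv_into[OF bij] bij_betw_apply by fastforce
  have "\<bar>mat_pow M k $ a $ b\<bar> \<le> c * r ^ k" for k a b
  proof -
    have "B' ^\<^sub>m k = tm f n (mat_pow ((1 / r) *\<^sub>R M) k)" unfolding B'_def tm_pow ..
    then have "(B' ^\<^sub>m k) $$ (g a, g b) = complex_of_real ((1 / r) ^ k * mat_pow M k $ a $ b)"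
      using gn[of a] gn[of b] by (simp add: mat_pow_scale fg)
    moreover have "norm ((B' ^\<^sub>m k) $$ (g a, g b)) \<le> c"
      using c[of k] gn[of a] gn[of b] Bc unfolding norm_bound_def by simp
    ultimately have "cmod (complex_of_real ((1 / r) ^ k * mat_pow M k $ a $ b)) \<le> c"
      by (simp only:)
    then have "\<bar>(1 / r) ^ k * mat_pow M k $ a $ b\<bar> \<le> c"
      by (simp only: norm_of_real)
    then have "(1 / r) ^ k * \<bar>mat_pow M k $ a $ b\<bar> \<le> c"
      using r0 by (simp add: abs_mult)
    then have "r ^ k * ((1 / r) ^ k * \<bar>mat_pow M k $ a $ b\<bar>) \<le> r ^ k * c"
      using r0 by (intro mult_left_mono) auto
    then show ?thesis using r0 by (simp add: power_one_over field_simps)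
  qed
  then show ?thesis using r0 r1 by blast
qed

end

lemma schur_bound':
  assumes "schur (M :: real^'n^'n)"
  shows "\<exists>c r. 0 < r \<and> r < 1 \<and> (\<forall>k a b. \<bar>mat_pow M k $ a $ b\<bar> \<le> c * r ^ k)"
proof -
  obtain f :: "nat \<Rightarrow> 'n" where bij: "bij_betw f {0..<card (UNIV :: 'n set)} UNIV"
    using ex_bij_betw_nat_finite[of "UNIV :: 'n set"] by auto
  have "card (UNIV :: 'n set) > 0" by simp
  from schur_bound[OF bij assms this] show ?thesis .
qed

lemma schur_tendsto:
  fixes M :: "real^'n^'n"
  assumes "schur M" shows "(\<lambda>k. mat_pow M k *v e) \<longlonglongrightarrow> 0"
proof -
  from schur_bound'[OF assms] obtain c r where r: "0 < r" "r < 1"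
    and b: "\<And>k a b. \<bar>mat_pow M k $ a $ b\<bar> \<le> c * r ^ k" by blast
  have rk: "(\<lambda>k. c * r ^ k) \<longlonglongrightarrow> 0"
    using r by (intro tendsto_mult_right_zero LIMSEQ_realpow_zero) auto
  show ?thesis
  proof (rule vec_tendstoI)
    fix i
    have ent: "(\<lambda>k. mat_pow M k $ i $ j) \<longlonglongrightarrow> 0" for j
    proof (rule Lim_null_comparison[OF _ rk])
      show "\<forall>\<^sub>F k in sequentially. norm (mat_pow M k $ i $ j) \<le> c * r ^ k"
        using b by simp
    qed
    have "(\<lambda>k. \<Sum>j\<in>UNIV. mat_pow M k $ i $ j * e $ j) \<longlonglongrightarrow> (\<Sum>j\<in>UNIV. 0 * e $ j)"
      by (intro tendsto_sum tendsto_mult ent tendsto_const)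
    then show "(\<lambda>k. (mat_pow M k *v e) $ i) \<longlonglongrightarrow> 0 $ i"
      by (simp add: matrix_vector_mult_def)
  qed
qed

lemma mat_pow_period: "mat_pow S r = mat 1 \<Longrightarrow> mat_pow S (j * r) = mat 1"
  by (induction j) (simp_all add: mat_pow_add matrix_mul_lid)

lemma matrix_inv_eq: assumes "A ** B = mat 1" "B ** A = mat 1"
  shows "matrix_inv A = B"
proof -
  have ex: "\<exists>A'. A ** A' = mat 1 \<and> A' ** A = mat 1" using assms by blast
  define A' where "A' = matrix_inv A"
  have h: "A ** A' = mat 1 \<and> A' ** A = mat 1"
    unfolding A'_def matrix_inv_def by (rule someI_ex[OF ex])
  have "A' = A' ** (A ** B)" using assms by (simp add: matrix_mul_rid)
  also have "\<dots> = (A' ** A) ** B" by (simp add: matrix_mul_assoc)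
  also have "\<dots> = B" using h by (simp add: matrix_mul_lid)
  finally show ?thesis unfolding A'_def .
qed

lemma matrix_vector_mult_diff_rdistrib': "((X::real^'n^'m) - Y) *v v = X *v v - Y *v v"
  by (simp add: Finite_Cartesian_Product.vec_eq_iff matrix_vector_mult_def sum_subtractf left_diff_distrib)

lemma traj_shift:
  "traj Ac BL S x w (Suc k) = traj Ac BL S (Ac *v x + BL *v w) (S *v w) k"
  by (induction k) (simp_all add: case_prod_beta)

lemma traj_closed:
  assumes key: "\<And>v. Ac *v (P *v v) + BL *v v = P *v (S *v v)"
  shows "traj Ac BL S x w k =
     (P *v (mat_pow S k *v w) + mat_pow Ac k *v (x - P *v w), mat_pow S k *v w)"
proof (induction k)
  case 0
  then show ?case by (simp add: matrix_vector_mul_lid)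
next
  case (Suc k)
  have "Ac *v (P *v (mat_pow S k *v w) + mat_pow Ac k *v (x - P *v w)) + BL *v (mat_pow S k *v w)
     = (Ac *v (P *v (mat_pow S k *v w)) + BL *v (mat_pow S k *v w)) + Ac *v (mat_pow Ac k *v (x - P *v w))"
    by (simp add: matrix_vector_right_distrib algebra_simps)
  also have "\<dots> = P *v (mat_pow S (Suc k) *v w) + mat_pow Ac (Suc k) *v (x - P *v w)"
  proof -
    have "Ac *v (P *v (mat_pow S k *v w)) + BL *v (mat_pow S k *v w) = P *v (S *v (mat_pow S k *v w))"
      by (rule key)
    also have "\<dots> = P *v (mat_pow S (Suc k) *v w)"
      by (simp add: mat_pow_Suc matrix_vector_mul_assoc)
    finally show ?thesis by (simp add: mat_pow_Suc matrix_vector_mul_assoc)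
  qed
  finally show ?case using Suc by (simp add: mat_pow_Suc matrix_vector_mul_assoc)
qed

theorem lemma4:
  fixes A :: "real^'n^'n" and B :: "real^'m^'n" and C :: "real^'n^'q"
    and K :: "real^'n^'m" and S :: "real^'p^'p" and Qe :: "real^'p^'q"
    and Pi :: "real^'p^'n" and Gamma :: "real^'p^'m"
    and Z :: "((real^'n) \<times> (real^'m)) set" and \<epsilon> :: real and \<rho> :: nat
  assumes ctrb: "controllable A B"
    and Z_poly: "polytope Z" and Z_int: "0 \<in> interior Z"
    and K_schur: "schur (A + B ** K)"
    and rho_pos: "\<rho> > 0" and S_per: "mat_pow S \<rho> = mat 1"
    and rank_cond: "\<And>\<mu>. is_eigenvalue S \<mu> \<Longrightarrow> full_row_rank (regulator_block A B C \<mu>)"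
    and reg1: "A ** Pi + B ** Gamma = Pi ** S"
    and reg2: "C ** Pi = Qe"
    and eps: "0 < \<epsilon>" "\<epsilon> < 1"
  shows "(\<forall>w \<in> R_inf A B K (Gamma - K ** Pi) S Z \<epsilon>.
           S *v w \<in> R_inf A B K (Gamma - K ** Pi) S Z \<epsilon>
         \<and> matrix_inv S *v w \<in> R_inf A B K (Gamma - K ** Pi) S Z \<epsilon>
         \<and> (Pi *v w, w) \<in> O_inf A B K (Gamma - K ** Pi) S Z \<epsilon>)
         \<and> ((\<lambda>w. S *v w) ` R_inf A B K (Gamma - K ** Pi) S Z \<epsilon> = R_inf A B K (Gamma - K ** Pi) S Z \<epsilon>)"
proof -
  define L where "L = Gamma - K ** Pi"
  define Ac where "Ac = A + B ** K"
  define T where "T = (\<lambda>z. (1 - \<epsilon>) *\<^sub>R z) ` Z"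
  define R where "R = R_inf A B K L S Z \<epsilon>"
  define Oset where "Oset = O_inf A B K L S Z \<epsilon>"
  have O_iff: "(x, w) \<in> Oset \<longleftrightarrow> (\<forall>k. let (xk, wk) = traj Ac (B ** L) S x w k
       in (xk, K *v xk + L *v wk) \<in> T)" for x w
    unfolding Oset_def O_inf_def Ac_def T_def by simp
  have R_iff: "w \<in> R \<longleftrightarrow> (\<exists>x. (x, w) \<in> Oset)" for w
    unfolding R_def R_inf_def Oset_def by simp
  have key: "Ac *v (Pi *v v) + (B ** L) *v v = Pi *v (S *v v)" for v
  proof -
    have "Ac *v (Pi *v v) + (B ** L) *v v = (A ** Pi + B ** Gamma) *v v"
      unfolding Ac_def L_def
      by (simp add: matrix_vector_mult_add_rdistrib matrix_vector_mul_assoc[symmetric]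
          matrix_vector_mult_diff_distrib matrix_vector_mult_diff_rdistrib')
    also have "\<dots> = Pi *v (S *v v)" by (simp add: reg1 matrix_vector_mul_assoc)
    finally show ?thesis .
  qed
  have shiftO: "(Ac *v x + (B ** L) *v w, S *v w) \<in> Oset" if "(x, w) \<in> Oset" for x w
  proof -
    have "\<forall>k. let (xk, wk) = traj Ac (B ** L) S x w (Suc k)
       in (xk, K *v xk + L *v wk) \<in> T" using that O_iff by blast
    then show ?thesis unfolding O_iff traj_shift by simp
  qed
  have shiftR: "S *v w \<in> R" if "w \<in> R" for w
    using that shiftO R_iff by blast
  have powR: "mat_pow S m *v w \<in> R" if "w \<in> R" for w m
  proof (induction m)
    case 0 then show ?case using that by (simp add: matrix_vector_mul_lid)
  next
    case (Suc m) then show ?case using shiftR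
      by (simp add: mat_pow_Suc matrix_vector_mul_assoc[symmetric])
  qed
  obtain r where r: "\<rho> = Suc r" using rho_pos by (cases \<rho>) auto
  have Sr1: "S ** mat_pow S r = mat 1" using S_per r by (simp add: mat_pow_Suc)
  have Sr2: "mat_pow S r ** S = mat 1" using S_per r by (simp add: mat_pow_Suc')
  have Sinv: "matrix_inv S = mat_pow S r" by (rule matrix_inv_eq[OF Sr1 Sr2])
  have cl: "closed T"
    unfolding T_def by (intro compact_imp_closed compact_scaling polytope_imp_compact Z_poly)
  have conv: "(\<lambda>k. mat_pow Ac k *v e) \<longlonglongrightarrow> 0" for e
    using schur_tendsto K_schur unfolding Ac_def by blast
  have iv: "(Pi *v w, w) \<in> Oset" if "w \<in> R" for w
  proof -
    from that[unfolded R_iff] obtain x where x: "(x, w) \<in> Oset" ..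
    define e where "e = x - Pi *v w"
    show ?thesis unfolding O_iff
    proof
      fix k
      define wk where "wk = mat_pow S k *v w"
      define d where "d = (\<lambda>j. mat_pow Ac (k + j * \<rho>) *v e)"
      have per: "mat_pow S (k + j * \<rho>) = mat_pow S k" for j
        by (simp add: mat_pow_add mat_pow_period[OF S_per] matrix_mul_rid)
      from x have allk: "\<forall>k. let (xk, wk) = traj Ac (B ** L) S x w k
           in (xk, K *v xk + L *v wk) \<in> T" unfolding O_iff .
      have inT: "(Pi *v wk + d j, K *v (Pi *v wk + d j) + L *v wk) \<in> T" for j
      proof -
        have "let (xk, wk) = traj Ac (B ** L) S x w (k + j * \<rho>)
           in (xk, K *v xk + L *v wk) \<in> T" using allk by (rule spec)
        then show ?thesis
          unfolding traj_closed[of Ac Pi "B ** L" S, OF key] per d_def wk_def e_def Let_def by simp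
      qed
      have sm: "strict_mono (\<lambda>j. k + j * \<rho>)"
        by (rule strict_monoI) (simp add: rho_pos)
      have d0: "d \<longlonglongrightarrow> 0"
        using LIMSEQ_subseq_LIMSEQ[OF conv[of e] sm] unfolding d_def o_def by simp
      have lim: "(\<lambda>j. (Pi *v wk + d j, K *v (Pi *v wk + d j) + L *v wk))
          \<longlonglongrightarrow> (Pi *v wk + 0, K *v (Pi *v wk + 0) + L *v wk)"
      proof -
        have a: "(\<lambda>j. Pi *v wk + d j) \<longlonglongrightarrow> Pi *v wk + 0"
          by (rule tendsto_add[OF tendsto_const d0])
        have b: "(\<lambda>j. K *v (Pi *v wk + d j)) \<longlonglongrightarrow> K *v (Pi *v wk + 0)"
          by (rule bounded_linear.tendsto[OF matrix_vector_mul_bounded_linear a])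
        show ?thesis by (rule tendsto_Pair[OF a tendsto_add[OF b tendsto_const]])
      qed
      have "(Pi *v wk + 0, K *v (Pi *v wk + 0) + L *v wk) \<in> T"
        by (rule closed_sequentially[OF cl _ lim]) (use inT in blast)
      then show "let (xk, wk) = traj Ac (B ** L) S (Pi *v w) w k in (xk, K *v xk + L *v wk) \<in> T"
        unfolding traj_closed[of Ac Pi "B ** L" S, OF key] wk_def Let_def by simp
    qed
  qed
  have img: "(\<lambda>w. S *v w) ` R = R"
  proof
    show "(\<lambda>w. S *v w) ` R \<subseteq> R" using shiftR by blast
    show "R \<subseteq> (\<lambda>w. S *v w) ` R"
    proof
      fix w assume w: "w \<in> R"
      have "w = S *v (mat_pow S r *v w)"
        by (simp add: matrix_vector_mul_assoc Sr1 matrix_vector_mul_lid)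
      then show "w \<in> (\<lambda>w. S *v w) ` R" using powR[OF w] by blast
    qed
  qed
  show ?thesis
    unfolding L_def[symmetric] R_def[symmetric] Oset_def[symmetric]
    using shiftR powR iv img Sinv by auto
qed

end
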